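(* Let $(M,\mathcal{C})$ be an $n$-dimensional complex Cartan space. If $(M,\mathcal{C})$ is strongly Berwald–Cartan, then it is a Kähler–Cartan space.
   Context: Let $M$ be an $n$-dimensional complex manifold; on $T'^{*}M$ use local coordinates $(z^k,\zeta_k)$. A complex Cartan space $(M,\mathcal{C})$ is given by a continuous $\mathcal{C}:T'^{*}M\to[0,\infty)$ with $H:=\mathcal{C}^2$ smooth off the zero section, $\mathcal{C}(z,\zeta)=0$ iff $\zeta=0$, $\mathcal{C}(z,\lambda\zeta)=|\lambda|\mathcal{C}(z,\zeta)$ for $\lambda\in\mathbb{C}$, and $h^{\bar j i}:=\frac{\partial^2H}{\partial\zeta_i\partial\bar\zeta_j}$ positive definite; $(h_{j\bar k})$ is its inverse. Summation over repeated indices; $\zeta^j:=h^{\bar mj}\bar\zeta_{m}$; $\dot\partial^k:=\partial/\partial\zeta_k$. Chern–Cartan nonlinear connection: $N_{ji}:=-h_{j\bar k}\frac{\partial h^{\bar kl}}{\partial z^i}\zeta_l$, $\delta^*_k:=\frac{\partial}{\partial z^k}+N_{jk}\dot\partial^j$; Chern–Cartan horizontal coefficients $H^i_{jk}:=h^{\bar m i}\delta^*_k(h_{j\bar m})=\dot\partial^iN_{jk}$, with $H^i_{jk}\zeta_i=N_{jk}$. The space is Kähler–Cartan if $N_{jk}=N_{kj}$ for all $j,k$ (equivalently $(H^i_{jk}-H^i_{kj})\zeta_i=0$); weakly Kähler–Cartan if $(N_{jk}-N_{kj})\zeta^j=0$ for all $k$; Berwald–Cartan if all $H^i_{jk}$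 depend only on $z$; strongly Berwald–Cartan if it is Berwald–Cartan and weakly Kähler–Cartan. *)

theory Defs
  imports "HOL-Analysis.Analysis"
begin

text \<open>Local-coordinate model of a complex Cartan space over one holomorphic chart
  U of M (U an open subset of complex n-space). A point of T'*M over U is a pair
  (z, zeta) with z in U and zeta in complex n-space (fibre coordinates).\<close>

type_synonym 'n cpt = "(complex^'n) \<times> (complex^'n)"

primrec Ck :: "nat \<Rightarrow> 'a::real_normed_vector set \<Rightarrow> ('a \<Rightarrow> 'b::real_normed_vector) \<Rightarrow> bool" where
  "Ck 0 S f = continuous_on S f"
| "Ck (Suc k) S f = (f differentiable_on S \<and>
      (\<forall>v. Ck k S (\<lambda>p. frechet_derivative f (at p) v)))"

definition smooth_on :: "'a::real_normed_vector set \<Rightarrow> ('a \<Rightarrow> 'b::real_normed_vector) \<Rightarrow> bool" where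
  "smooth_on S f \<longleftrightarrow> (\<forall>k. Ck k S f)"

definition rdir :: "('a::real_normed_vector \<Rightarrow> complex) \<Rightarrow> 'a \<Rightarrow> 'a \<Rightarrow> complex" where
  "rdir f p v = frechet_derivative f (at p) v"

definition dz :: "'n::finite \<Rightarrow> ('n cpt \<Rightarrow> complex) \<Rightarrow> 'n cpt \<Rightarrow> complex" where
  "dz k f p = (rdir f p (axis k 1, 0) - \<i> * rdir f p (axis k \<i>, 0)) / 2"

definition dzeta :: "'n::finite \<Rightarrow> ('n cpt \<Rightarrow> complex) \<Rightarrow> 'n cpt \<Rightarrow> complex" where
  "dzeta k f p = (rdir f p (0, axis k 1) - \<i> * rdir f p (0, axis k \<i>)) / 2"

definition dzetabar :: "'n::finite \<Rightarrow> ('n cpt \<Rightarrow> complex) \<Rightarrow> 'n cpt \<Rightarrow> complex" where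
  "dzetabar k f p = (rdir f p (0, axis k 1) + \<i> * rdir f p (0, axis k \<i>)) / 2"

text \<open>hup H p $ j $ i = h^{bar j i} = d^2 H / (d zeta_i d conj(zeta_j))\<close>
definition hup :: "('n::finite cpt \<Rightarrow> real) \<Rightarrow> 'n cpt \<Rightarrow> complex^'n^'n" where
  "hup H p = (\<chi> j i. dzeta i (\<lambda>q. dzetabar j (\<lambda>r. complex_of_real (H r)) q) p)"

text \<open>hdown H p $ j $ k = h_{j bar k}, the inverse matrix: sum_k h_{j bar k} h^{bar k i} = delta_j^i\<close>
definition hdown :: "('n::finite cpt \<Rightarrow> real) \<Rightarrow> 'n cpt \<Rightarrow> complex^'n^'n" where
  "hdown H p = matrix_inv (hup H p)"

definition Nconn :: "('n::finite cpt \<Rightarrow> real) \<Rightarrow> 'n \<Rightarrow> 'n \<Rightarrow> 'n cpt \<Rightarrow> complex" where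
  "Nconn H j i p = - (\<Sum>k\<in>UNIV. \<Sum>l\<in>UNIV.
      hdown H p $ j $ k * dz i (\<lambda>q. hup H q $ k $ l) p * (snd p $ l))"

definition delta_star :: "('n::finite cpt \<Rightarrow> real) \<Rightarrow> 'n \<Rightarrow> ('n cpt \<Rightarrow> complex) \<Rightarrow> 'n cpt \<Rightarrow> complex" where
  "delta_star H k f p = dz k f p + (\<Sum>j\<in>UNIV. Nconn H j k p * dzeta j f p)"

definition HC :: "('n::finite cpt \<Rightarrow> real) \<Rightarrow> 'n \<Rightarrow> 'n \<Rightarrow> 'n \<Rightarrow> 'n cpt \<Rightarrow> complex" where
  "HC H i j k p = (\<Sum>m\<in>UNIV. hup H p $ m $ i * delta_star H k (\<lambda>q. hdown H q $ j $ m) p)"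

definition zeta_up :: "('n::finite cpt \<Rightarrow> real) \<Rightarrow> 'n \<Rightarrow> 'n cpt \<Rightarrow> complex" where
  "zeta_up H j p = (\<Sum>m\<in>UNIV. hup H p $ m $ j * cnj (snd p $ m))"

definition slit :: "(complex^'n) set \<Rightarrow> 'n cpt set" where
  "slit U = U \<times> (UNIV - {0})"

definition complex_cartan :: "(complex^'n::finite) set \<Rightarrow> ('n cpt \<Rightarrow> real) \<Rightarrow> bool" where
  "complex_cartan U C \<longleftrightarrow>
     open U \<and>
     continuous_on (U \<times> UNIV) C \<and>
     (\<forall>z\<in>U. \<forall>\<zeta>. 0 \<le> C (z, \<zeta>)) \<and>
     smooth_on (slit U) (\<lambda>p. (C p)\<^sup>2) \<and>
     (\<forall>z\<in>U. \<forall>\<zeta>. C (z, \<zeta>) = 0 \<longleftrightarrow> \<zeta> = 0) \<and>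
     (\<forall>z\<in>U. \<forall>\<zeta>. \<forall>c::complex. C (z, c *s \<zeta>) = cmod c * C (z, \<zeta>)) \<and>
     (\<forall>p\<in>slit U. \<forall>v::complex^'n. v \<noteq> 0 \<longrightarrow>
        (let q = (\<Sum>i\<in>UNIV. \<Sum>j\<in>UNIV. hup (\<lambda>p. (C p)\<^sup>2) p $ j $ i * v $ i * cnj (v $ j))
         in Im q = 0 \<and> 0 < Re q))"

definition kahler_cartan :: "(complex^'n::finite) set \<Rightarrow> ('n cpt \<Rightarrow> real) \<Rightarrow> bool" where
  "kahler_cartan U C \<longleftrightarrow>
     (\<forall>p\<in>slit U. \<forall>j k. Nconn (\<lambda>p. (C p)\<^sup>2) j k p = Nconn (\<lambda>p. (C p)\<^sup>2) k j p)"

definition weakly_kahler_cartan :: "(complex^'n::finite) set \<Rightarrow> ('n cpt \<Rightarrow> real) \<Rightarrow> bool" where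
  "weakly_kahler_cartan U C \<longleftrightarrow>
     (\<forall>p\<in>slit U. \<forall>k. (\<Sum>j\<in>UNIV. (Nconn (\<lambda>p. (C p)\<^sup>2) j k p - Nconn (\<lambda>p. (C p)\<^sup>2) k j p)
                               * zeta_up (\<lambda>p. (C p)\<^sup>2) j p) = 0)"

definition berwald_cartan :: "(complex^'n::finite) set \<Rightarrow> ('n cpt \<Rightarrow> real) \<Rightarrow> bool" where
  "berwald_cartan U C \<longleftrightarrow>
     (\<forall>i j k. \<exists>G :: complex^'n \<Rightarrow> complex.
        \<forall>z \<zeta>. (z, \<zeta>) \<in> slit U \<longrightarrow> HC (\<lambda>p. (C p)\<^sup>2) i j k (z, \<zeta>) = G z)"

definition strongly_berwald_cartan :: "(complex^'n::finite) set \<Rightarrow> ('n cpt \<Rightarrow> real) \<Rightarrow> bool" where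
  "strongly_berwald_cartan U C \<longleftrightarrow> berwald_cartan U C \<and> weakly_kahler_cartan U C"

end

theory Submission
  imports Defs
begin

lemma rdir_has: "(f has_derivative f') (at p) \<Longrightarrow> rdir f p v = f' v"
  unfolding rdir_def by (metis frechet_derivative_at)

lemma rdir_works: "f differentiable at p \<Longrightarrow> (f has_derivative rdir f p) (at p)"
  unfolding rdir_def[abs_def] by (simp add: frechet_derivative_works)

lemma rdir_add: "f differentiable at p \<Longrightarrow> g differentiable at p \<Longrightarrow>
   rdir (\<lambda>q. f q + g q) p v = rdir f p v + rdir g p v"
  by (rule rdir_has) (intro has_derivative_add rdir_works)

lemma rdir_diff: "f differentiable at p \<Longrightarrow> g differentiable at p \<Longrightarrow>
   rdir (\<lambda>q. f q - g q) p v = rdir f p v - rdir g p v"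
  by (rule rdir_has) (intro has_derivative_diff rdir_works)

lemma rdir_mult: "f differentiable at p \<Longrightarrow> g differentiable at p \<Longrightarrow>
   rdir (\<lambda>q. f q * g q) p v = f p * rdir g p v + rdir f p v * (g p :: complex)"
  by (rule rdir_has) (intro has_derivative_mult rdir_works)

lemma rdir_const: "rdir (\<lambda>q. c) p v = 0"
  by (rule rdir_has) (rule has_derivative_const)

lemma rdir_sum: "finite A \<Longrightarrow> (\<And>i. i \<in> A \<Longrightarrow> f i differentiable at p) \<Longrightarrow>
   rdir (\<lambda>q. \<Sum>i\<in>A. f i q) p v = (\<Sum>i\<in>A. rdir (f i) p v)"
  apply (rule rdir_has)
  apply (rule has_derivative_sum)
  by (simp add: rdir_works)

lemma rdir_cnj: "f differentiable at p \<Longrightarrow> rdir (\<lambda>q. cnj (f q)) p v = cnj (rdir f p v)"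
  by (rule rdir_has) (intro has_derivative_cnj rdir_works)

lemma rdir_of_real: "f differentiable at p \<Longrightarrow> rdir (\<lambda>q. complex_of_real (f q)) p v = of_real (frechet_derivative f (at p) v)"
  apply (rule rdir_has)
  using has_derivative_of_real[OF frechet_derivative_works[THEN iffD1]] by blast

lemma rdir_snd: "rdir (\<lambda>q::'n::finite cpt. snd q $ m) p v = snd v $ m"
  apply (rule rdir_has)
  apply (rule bounded_linear.has_derivative[where f="\<lambda>q. snd q $ m", OF _ has_derivative_ident])
  by (intro bounded_linear_compose[OF bounded_linear_vec_nth] bounded_linear_snd)

lemma rdir_transform: "open S \<Longrightarrow> p \<in> S \<Longrightarrow> (\<And>q. q \<in> S \<Longrightarrow> f q = g q) \<Longrightarrow> f differentiable at p \<Longrightarrow>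
   rdir g p v = rdir f p v"
  unfolding rdir_def by (metis frechet_derivative_transform_within_open)

lemma diff_transform: "open S \<Longrightarrow> p \<in> S \<Longrightarrow> (\<And>q. q \<in> S \<Longrightarrow> f q = g q) \<Longrightarrow> f differentiable at p \<Longrightarrow>
   g differentiable at p"
  unfolding differentiable_def by (metis has_derivative_transform_within_open)

lemma diff_snd: "(\<lambda>q::'n::finite cpt. snd q $ m) differentiable at p"
  unfolding differentiable_def
  apply (rule exI)
  apply (rule bounded_linear.has_derivative[where f="\<lambda>q. snd q $ m", OF _ has_derivative_ident])
  by (intro bounded_linear_compose[OF bounded_linear_vec_nth] bounded_linear_snd)

lemma differentiable_on_open_iff: "open S \<Longrightarrow> f differentiable_on S \<longleftrightarrow> (\<forall>p\<in>S. f differentiable at p)"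
  unfolding differentiable_on_def by (metis at_within_open)

lemma Ck_cong: "open S \<Longrightarrow> (\<And>q. q \<in> S \<Longrightarrow> f q = g q) \<Longrightarrow> Ck k S f \<Longrightarrow> Ck k S g"
proof (induction k arbitrary: f g)
  case 0
  then show ?case using continuous_on_cong by (metis Ck.simps(1))
next
  case (Suc k)
  have d: "\<forall>p\<in>S. f differentiable at p" using Suc.prems by (simp add: differentiable_on_open_iff)
  have dg: "\<forall>p\<in>S. g differentiable at p"
  proof
    fix p assume "p \<in> S" then show "g differentiable at p" using diff_transform[of S p f g] Suc.prems d by blast
  qed
  have "Ck k S (\<lambda>p. frechet_derivative g (at p) v)" for v
  proof (rule Suc.IH[OF Suc.prems(1)])
    show "Ck k S (\<lambda>p. frechet_derivative f (at p) v)" using Suc.prems(3) by simp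
    fix q assume "q \<in> S"
    then show "frechet_derivative f (at q) v = frechet_derivative g (at q) v"
      using frechet_derivative_transform_within_open[of f q S g] Suc.prems d \<open>q\<in>S\<close> by metis
  qed
  then show ?case using dg Suc.prems(1) by (simp add: differentiable_on_open_iff)
qed

lemma smooth_cong: "open S \<Longrightarrow> (\<And>q. q \<in> S \<Longrightarrow> f q = g q) \<Longrightarrow> smooth_on S f \<Longrightarrow> smooth_on S g"
  unfolding smooth_on_def using Ck_cong by blast

lemma smooth_D: "smooth_on S f \<Longrightarrow> smooth_on S (\<lambda>p. frechet_derivative f (at p) v)"
  unfolding smooth_on_def by (metis Ck.simps(2))

lemma smooth_diff: "open S \<Longrightarrow> smooth_on S f \<Longrightarrow> p \<in> S \<Longrightarrow> f differentiable at p"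
  unfolding smooth_on_def by (metis Ck.simps(2) differentiable_on_open_iff)

lemma Ck_add: "open S \<Longrightarrow> Ck k S (f::'a::real_normed_vector \<Rightarrow> 'b::real_normed_vector) \<Longrightarrow> Ck k S g \<Longrightarrow> Ck k S (\<lambda>q. f q + g q)"
proof (induction k arbitrary: f g)
  case 0
  then show ?case by (simp add: continuous_on_add)
next
  case (Suc k)
  have d: "\<forall>p\<in>S. f differentiable at p" "\<forall>p\<in>S. g differentiable at p"
    using Suc.prems by (simp_all add: differentiable_on_open_iff)
  have "Ck k S (\<lambda>p. frechet_derivative (\<lambda>q. f q + g q) (at p) v)" for v
  proof (rule Ck_cong[OF Suc.prems(1)])
    show "Ck k S (\<lambda>p. frechet_derivative f (at p) v + frechet_derivative g (at p) v)"
      using Suc.IH[OF Suc.prems(1)] Suc.prems(2,3) by simp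
    fix q assume "q \<in> S"
    then show "frechet_derivative f (at q) v + frechet_derivative g (at q) v = frechet_derivative (\<lambda>q. f q + g q) (at q) v"
    proof -
      have "((\<lambda>q. f q + g q) has_derivative (\<lambda>v. frechet_derivative f (at q) v + frechet_derivative g (at q) v)) (at q)"
      proof -
        have "f differentiable at q" "g differentiable at q" using d \<open>q \<in> S\<close> by blast+
        then have fd: "(f has_derivative frechet_derivative f (at q)) (at q)" "(g has_derivative frechet_derivative g (at q)) (at q)" by (simp_all add: frechet_derivative_works)
        show ?thesis by (rule has_derivative_add[OF fd])
      qed
      from frechet_derivative_at[OF this] show ?thesis by metis
    qed
  qed
  then show ?case using d Suc.prems(1) by (simp add: differentiable_on_open_iff)
qed

lemma Ck_lin: "open S \<Longrightarrow> bounded_linear L \<Longrightarrow> Ck k S (f::'a::real_normed_vector \<Rightarrow> 'b::real_normed_vector) \<Longrightarrow> Ck k S (\<lambda>q. L (f q) :: 'c::real_normed_vector)"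
proof (induction k arbitrary: f)
  case 0
  then show ?case by (simp add: bounded_linear.continuous_on continuous_on_id')
next
  case (Suc k)
  have d: "\<forall>p\<in>S. f differentiable at p"
    using Suc.prems by (simp_all add: differentiable_on_open_iff)
  have d2: "\<forall>p\<in>S. (\<lambda>q. L (f q)) differentiable at p"
    using d Suc.prems(2) unfolding differentiable_def by (metis bounded_linear.has_derivative)
  have "Ck k S (\<lambda>p. frechet_derivative (\<lambda>q. L (f q)) (at p) v)" for v
  proof (rule Ck_cong[OF Suc.prems(1)])
    show "Ck k S (\<lambda>p. L (frechet_derivative f (at p) v))"
      using Suc.IH[OF Suc.prems(1,2)] Suc.prems(3) by simp
    fix q assume "q \<in> S"
    then show "L (frechet_derivative f (at q) v) = frechet_derivative (\<lambda>q. L (f q)) (at q) v"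
    proof -
      have "((\<lambda>q. L (f q)) has_derivative (\<lambda>v. L (frechet_derivative f (at q) v))) (at q)"
      proof -
        have "f differentiable at q" using d \<open>q \<in> S\<close> by blast
        then have fd: "(f has_derivative frechet_derivative f (at q)) (at q)" by (simp add: frechet_derivative_works)
        show ?thesis by (rule bounded_linear.has_derivative[OF Suc.prems(2) fd])
      qed
      from frechet_derivative_at[OF this] show ?thesis by metis
    qed
  qed
  then show ?case using d2 Suc.prems(1) by (simp add: differentiable_on_open_iff)
qed

lemma smooth_add: "open S \<Longrightarrow> smooth_on S f \<Longrightarrow> smooth_on S g \<Longrightarrow> smooth_on S (\<lambda>q. f q + g q)"
  unfolding smooth_on_def using Ck_add by blast

lemma smooth_lin: "open S \<Longrightarrow> bounded_linear L \<Longrightarrow> smooth_on S f \<Longrightarrow> smooth_on S (\<lambda>q. L (f q))"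
  unfolding smooth_on_def using Ck_lin by blast

lemma smooth_cmult: "open S \<Longrightarrow> smooth_on S f \<Longrightarrow> smooth_on S (\<lambda>q. (c::complex) * f q)"
  using smooth_lin[OF _ bounded_linear_mult_right] by blast

lemma smooth_cnj: "open S \<Longrightarrow> smooth_on S f \<Longrightarrow> smooth_on S (\<lambda>q. cnj (f q))"
  using smooth_lin[OF _ bounded_linear_cnj] by blast

lemma smooth_of_real: "open S \<Longrightarrow> smooth_on S f \<Longrightarrow> smooth_on S (\<lambda>q. complex_of_real (f q))"
  using smooth_lin[OF _ bounded_linear_of_real] by blast

lemma smooth_rdir: "smooth_on S f \<Longrightarrow> smooth_on S (\<lambda>p. rdir f p v)"
  unfolding rdir_def by (rule smooth_D)

lemma smooth_wirt: "open S \<Longrightarrow> smooth_on S f \<Longrightarrow> smooth_on S (\<lambda>p. (rdir f p u + c * rdir f p w) / 2)"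
proof -
  assume a: "open S" "smooth_on S f"
  have "smooth_on S (\<lambda>p. (1/2) * (rdir f p u + c * rdir f p w))"
    by (intro smooth_cmult smooth_add smooth_rdir a)
  then show ?thesis by simp
qed

lemma smooth_dz: "open S \<Longrightarrow> smooth_on S f \<Longrightarrow> smooth_on S (dz k f)"
  using smooth_wirt[of S f _ "-\<i>"] unfolding dz_def[abs_def] by simp

lemma smooth_dzeta: "open S \<Longrightarrow> smooth_on S f \<Longrightarrow> smooth_on S (dzeta k f)"
  using smooth_wirt[of S f _ "-\<i>"] unfolding dzeta_def[abs_def] by simp

lemma smooth_dzetabar: "open S \<Longrightarrow> smooth_on S f \<Longrightarrow> smooth_on S (dzetabar k f)"
  using smooth_wirt[of S f _ "\<i>"] unfolding dzetabar_def[abs_def] by simp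


lemma rdir_cnj_snd: "rdir (\<lambda>q::'n::finite cpt. cnj (snd q $ m)) p v = cnj (snd v $ m)"
  using rdir_cnj[OF diff_snd] rdir_snd by metis

lemma diff_cnj_snd: "(\<lambda>q::'n::finite cpt. cnj (snd q $ m)) differentiable at p"
  by (subst differentiable_cnj_iff) (rule diff_snd)

lemma dzeta_mult: "f differentiable at p \<Longrightarrow> g differentiable at p \<Longrightarrow>
   dzeta k (\<lambda>q. f q * g q) p = f p * dzeta k g p + dzeta k f p * g p"
  unfolding dzeta_def by (simp add: rdir_mult field_simps)

lemma dzetabar_mult: "f differentiable at p \<Longrightarrow> g differentiable at p \<Longrightarrow>
   dzetabar k (\<lambda>q. f q * g q) p = f p * dzetabar k g p + dzetabar k f p * g p"
  unfolding dzetabar_def by (simp add: rdir_mult field_simps)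

lemma dz_mult: "f differentiable at p \<Longrightarrow> g differentiable at p \<Longrightarrow>
   dz k (\<lambda>q. f q * g q) p = f p * dz k g p + dz k f p * g p"
  unfolding dz_def by (simp add: rdir_mult field_simps)

lemma dzeta_sum: "finite A \<Longrightarrow> (\<And>i. i \<in> A \<Longrightarrow> f i differentiable at p) \<Longrightarrow>
   dzeta k (\<lambda>q. \<Sum>i\<in>A. f i q) p = (\<Sum>i\<in>A. dzeta k (f i) p)"
  unfolding dzeta_def by (simp add: rdir_sum sum_subtractf sum_distrib_left flip: sum_divide_distrib)

lemma dzetabar_sum: "finite A \<Longrightarrow> (\<And>i. i \<in> A \<Longrightarrow> f i differentiable at p) \<Longrightarrow>
   dzetabar k (\<lambda>q. \<Sum>i\<in>A. f i q) p = (\<Sum>i\<in>A. dzetabar k (f i) p)"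
  unfolding dzetabar_def by (simp add: rdir_sum sum.distrib sum_distrib_left flip: sum_divide_distrib)

lemma dz_sum: "finite A \<Longrightarrow> (\<And>i. i \<in> A \<Longrightarrow> f i differentiable at p) \<Longrightarrow>
   dz k (\<lambda>q. \<Sum>i\<in>A. f i q) p = (\<Sum>i\<in>A. dz k (f i) p)"
  unfolding dz_def by (simp add: rdir_sum sum_subtractf sum_distrib_left flip: sum_divide_distrib)

lemma dzeta_transform: assumes "open S" "p \<in> S" "\<And>q. q \<in> S \<Longrightarrow> f q = g q" "f differentiable at p"
  shows "dzeta k g p = dzeta k f p"
  unfolding dzeta_def using rdir_transform[OF assms] by simp

lemma dzetabar_transform: assumes "open S" "p \<in> S" "\<And>q. q \<in> S \<Longrightarrow> f q = g q" "f differentiable at p"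
  shows "dzetabar k g p = dzetabar k f p"
  unfolding dzetabar_def using rdir_transform[OF assms] by simp

lemma dz_transform: assumes "open S" "p \<in> S" "\<And>q. q \<in> S \<Longrightarrow> f q = g q" "f differentiable at p"
  shows "dz k g p = dz k f p"
  unfolding dz_def using rdir_transform[OF assms] by simp

lemma dzeta_snd: "dzeta k (\<lambda>q::'n::finite cpt. snd q $ m) p = (if k = m then 1 else 0)"
  unfolding dzeta_def rdir_snd by (simp add: axis_def)

lemma dzetabar_snd: "dzetabar k (\<lambda>q::'n::finite cpt. snd q $ m) p = 0"
  unfolding dzetabar_def rdir_snd by (simp add: axis_def)

lemma dz_snd: "dz k (\<lambda>q::'n::finite cpt. snd q $ m) p = 0"
  unfolding dz_def rdir_snd by (simp add: axis_def)

lemma dzeta_cnj_snd: "dzeta k (\<lambda>q::'n::finite cpt. cnj (snd q $ m)) p = 0"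
  unfolding dzeta_def rdir_cnj_snd by (simp add: axis_def)

lemma dzetabar_cnj_snd: "dzetabar k (\<lambda>q::'n::finite cpt. cnj (snd q $ m)) p = (if k = m then 1 else 0)"
  unfolding dzetabar_def rdir_cnj_snd by (simp add: axis_def)

lemma dz_cnj_snd: "dz k (\<lambda>q::'n::finite cpt. cnj (snd q $ m)) p = 0"
  unfolding dz_def rdir_cnj_snd by (simp add: axis_def)

lemma dzetabar_cnj: "f differentiable at p \<Longrightarrow> dzetabar k (\<lambda>q. cnj (f q)) p = cnj (dzeta k f p)"
  unfolding dzetabar_def dzeta_def by (simp add: rdir_cnj)

lemma dzeta_const: "dzeta k (\<lambda>q. c) p = 0"
  unfolding dzeta_def by (simp add: rdir_const)
lemma dzetabar_const: "dzetabar k (\<lambda>q. c) p = 0"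
  unfolding dzetabar_def by (simp add: rdir_const)
lemma dz_const: "dz k (\<lambda>q. c) p = 0"
  unfolding dz_def by (simp add: rdir_const)


lemma curve_rdir:
  fixes f :: "'a::real_normed_vector \<Rightarrow> complex" and \<gamma> :: "real \<Rightarrow> 'a"
  assumes fd: "f differentiable at (\<gamma> 0)"
    and gd: "(\<gamma> has_derivative (\<lambda>t. t *\<^sub>R v)) (at 0)"
    and eq: "\<And>t. f (\<gamma> t) = g t"
    and g: "(g has_derivative (\<lambda>t. t *\<^sub>R d)) (at 0)"
  shows "rdir f (\<gamma> 0) v = d"
proof -
  have "((\<lambda>t. f (\<gamma> t)) has_derivative (\<lambda>t. rdir f (\<gamma> 0) (t *\<^sub>R v))) (at 0)"
    by (rule has_derivative_compose[OF gd rdir_works[OF fd]])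
  then have "(g has_derivative (\<lambda>t. rdir f (\<gamma> 0) (t *\<^sub>R v))) (at 0)"
    using eq by simp
  from has_derivative_unique[OF this g] have "rdir f (\<gamma> 0) (1 *\<^sub>R v) = 1 *\<^sub>R d" by metis
  then show ?thesis by simp
qed

lemma line_deriv: "((\<lambda>t::real. p + t *\<^sub>R v) has_derivative (\<lambda>t. t *\<^sub>R v)) (at 0)"
  by (auto intro!: derivative_eq_intros)

lemma circ_deriv: "((\<lambda>t::real. p + (cos t - 1) *\<^sub>R a + sin t *\<^sub>R b) has_derivative (\<lambda>t. t *\<^sub>R b)) (at 0)"
  by (auto intro!: derivative_eq_intros)


lemma cnj_decomp: "cnj z * (a + \<i> * b) = (Re z *\<^sub>R a + Im z *\<^sub>R b) + \<i> * ((- Im z) *\<^sub>R a + Re z *\<^sub>R b)"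
  by (simp add: complex_eq_iff scaleR_conv_of_real algebra_simps)

lemma vec_decomp: "(\<zeta>::complex^'n::finite) = (\<Sum>m\<in>UNIV. Re (\<zeta>$m) *\<^sub>R axis m 1 + Im (\<zeta>$m) *\<^sub>R axis m \<i>)"
  by (simp add: vec_eq_iff axis_def if_distrib[of "\<lambda>x. _ *\<^sub>R x"] sum.distrib complex_eq_iff cong: if_cong)

lemma qf_two:
  fixes h :: "complex^'n::finite^'n"
  assumes "a \<noteq> b"
  shows "(\<Sum>i\<in>UNIV. \<Sum>j\<in>UNIV. h $ j $ i * (axis a x + axis b y) $ i * cnj ((axis a x + axis b y) $ j))
     = h$a$a * x * cnj x + h$a$b * y * cnj x + h$b$a * x * cnj y + h$b$b * y * cnj y"
  using assms by (simp add: axis_def distrib_left distrib_right sum.distrib if_distrib[of "\<lambda>t. _ * t"] if_distrib[of "\<lambda>t. t * _"] if_distrib[of cnj] cong: if_cong)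

lemma qf_one:
  fixes h :: "complex^'n::finite^'n"
  shows "(\<Sum>i\<in>UNIV. \<Sum>j\<in>UNIV. h $ j $ i * (axis a x) $ i * cnj ((axis a x) $ j)) = h$a$a * x * cnj x"
  by (simp add: axis_def if_distrib[of "\<lambda>t. _ * t"] if_distrib[of "\<lambda>t. t * _"] if_distrib[of cnj] cong: if_cong)

lemma hermitian_from_pos:
  fixes h :: "complex^'n::finite^'n"
  assumes pos: "\<And>v. v \<noteq> 0 \<Longrightarrow> Im (\<Sum>i\<in>UNIV. \<Sum>j\<in>UNIV. h $ j $ i * v $ i * cnj (v $ j)) = 0"
  shows "h $ a $ b = cnj (h $ b $ a)"
proof (cases "a = b")
  case True
  have "axis a (1::complex) \<noteq> 0" by (simp add: axis_eq_0_iff)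
  from pos[OF this] have "Im (h$a$a) = 0" unfolding qf_one by simp
  then show ?thesis using True by (simp add: complex_eq_iff)
next
  case False
  have n1: "axis a 1 + axis b (1::complex) \<noteq> 0" using False by (simp add: vec_eq_iff axis_def) (metis one_neq_zero)
  have n2: "axis a 1 + axis b \<i> \<noteq> 0" using False by (simp add: vec_eq_iff axis_def) (metis one_neq_zero)
  have na: "axis a (1::complex) \<noteq> 0" "axis b (1::complex) \<noteq> 0" by (simp_all add: axis_eq_0_iff)
  have "Im (h$a$a) = 0" "Im (h$b$b) = 0" using pos[OF na(1)] pos[OF na(2)] unfolding qf_one by simp_all
  moreover have "Im (h$a$a + h$a$b + h$b$a + h$b$b) = 0" using pos[OF n1] unfolding qf_two[OF False] by simp
  moreover have "Im (h$a$a + h$a$b * \<i> - h$b$a * \<i> + h$b$b) = 0" using pos[OF n2] unfolding qf_two[OF False] by simp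
  ultimately show ?thesis by (simp add: complex_eq_iff)
qed

lemma qf_alt:
  fixes h :: "complex^'n::finite^'n"
  shows "(\<Sum>i\<in>UNIV. \<Sum>j\<in>UNIV. h $ j $ i * v $ i * cnj (v $ j)) = (\<Sum>j\<in>UNIV. cnj (v$j) * (h *v v) $ j)"
  by (subst sum.swap) (simp add: matrix_vector_mult_def sum_distrib_left mult_ac)

lemma pos_kernel:
  fixes h :: "complex^'n::finite^'n"
  assumes pos: "\<And>v. v \<noteq> 0 \<Longrightarrow> 0 < Re (\<Sum>i\<in>UNIV. \<Sum>j\<in>UNIV. h $ j $ i * v $ i * cnj (v $ j))"
    and "h *v v = 0"
  shows "v = 0"
proof (rule ccontr)
  assume "v \<noteq> 0"
  from pos[OF this] show False unfolding qf_alt using assms(2) by simp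
qed

lemma pos_invertible:
  fixes h :: "complex^'n::finite^'n"
  assumes pos: "\<And>v. v \<noteq> 0 \<Longrightarrow> 0 < Re (\<Sum>i\<in>UNIV. \<Sum>j\<in>UNIV. h $ j $ i * v $ i * cnj (v $ j))"
  shows "invertible h"
proof -
  have "inj ((*v) h)"
  proof (rule injI)
    fix x y assume "h *v x = h *v y"
    then have "h *v (x - y) = 0" by (simp add: matrix_vector_mult_diff_distrib)
    from pos_kernel[OF pos this] show "x = y" by simp
  qed
  then have "det (matrix ((*v) h)) \<noteq> 0"
    using det_nz_iff_inj_gen[of "(*v) h"] by (simp add: matrix_vector_mul_linear_gen)
  then show ?thesis by (simp add: invertible_det_nz matrix_of_matrix_vector_mul)
qed

lemma matrix_inv_props:
  fixes h :: "'a::semiring_1^'n^'n"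
  assumes "invertible h"
  shows "h ** matrix_inv h = mat 1" "matrix_inv h ** h = mat 1"
proof -
  have "\<exists>A'. h ** A' = mat 1 \<and> A' ** h = mat 1" using assms by (simp add: invertible_def)
  from someI_ex[OF this] show "h ** matrix_inv h = mat 1" "matrix_inv h ** h = mat 1"
    unfolding matrix_inv_def by auto
qed

lemma matrix_inv_cramer:
  fixes h :: "complex^'n::finite^'n"
  assumes "invertible h"
  shows "matrix_inv h $ i $ k = det (\<chi> a c. if c = i then axis k 1 $ a else h$a$c) / det h"
proof -
  have d: "det h \<noteq> 0" using assms invertible_det_nz by blast
  have "h *v (matrix_inv h *v axis k 1) = axis k 1"
    by (simp add: matrix_vector_mul_assoc matrix_inv_props[OF assms])
  then have "matrix_inv h *v axis k 1 = (\<chi> i. det (\<chi> a c. if c = i then axis k 1 $ a else h$a$c) / det h)"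
    using cramer[OF d] by blast
  then have "(matrix_inv h *v axis k 1) $ i = det (\<chi> a c. if c = i then axis k 1 $ a else h$a$c) / det h"
    by simp
  moreover have "(matrix_inv h *v axis k 1) $ i = matrix_inv h $ i $ k"
    by (simp add: matrix_vector_mult_def axis_def if_distrib[of "\<lambda>t. _ * t"] cong: if_cong)
  ultimately show ?thesis by simp
qed

lemma differentiable_prod':
  fixes f :: "'i \<Rightarrow> 'a::real_normed_vector \<Rightarrow> 'b::real_normed_field"
  shows "(\<And>i. i \<in> I \<Longrightarrow> f i differentiable at x) \<Longrightarrow> (\<lambda>x. \<Prod>i\<in>I. f i x) differentiable at x"
proof -
  assume a: "\<And>i. i \<in> I \<Longrightarrow> f i differentiable at x"
  have "\<forall>i\<in>I. \<exists>D. (f i has_derivative D) (at x)" using a unfolding differentiable_def by blast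
  from bchoice[OF this] obtain D where "\<forall>i\<in>I. (f i has_derivative D i) (at x)" by blast
  then have "((\<lambda>x. \<Prod>i\<in>I. f i x) has_derivative (\<lambda>y. \<Sum>i\<in>I. D i y * (\<Prod>j\<in>I - {i}. f j x))) (at x)"
    by (intro has_derivative_prod) blast
  then show ?thesis unfolding differentiable_def by blast
qed

lemma det_differentiable:
  fixes M :: "'a::real_normed_vector \<Rightarrow> complex^'n::finite^'n"
  assumes "\<And>a b. (\<lambda>q. M q $ a $ b) differentiable at p"
  shows "(\<lambda>q. det (M q)) differentiable at p"
  unfolding det_def
  apply (rule differentiable_sum)
   apply (simp add: finite_permutations)
  by (auto intro!: differentiable_mult differentiable_prod' assms)

locale cartan =
  fixes U :: "(complex^'n::finite) set" and C :: "'n cpt \<Rightarrow> real"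
  assumes cc: "complex_cartan U C"
begin

abbreviation "Hc \<equiv> \<lambda>r. complex_of_real ((C r)\<^sup>2)"

lemma openS: "open (slit U)"
  using cc unfolding complex_cartan_def slit_def
  by (auto intro!: open_Times open_Diff)

lemma smoothHc: "smooth_on (slit U) Hc"
proof -
  have "smooth_on (slit U) (\<lambda>p. (C p)^2)" using cc unfolding complex_cartan_def by blast
  from smooth_of_real[OF openS this] show ?thesis .
qed

lemma homog: "z \<in> U \<Longrightarrow> Hc (z, c *s \<zeta>) = of_real ((cmod c)\<^sup>2) * Hc (z, \<zeta>)"
  using cc unfolding complex_cartan_def by (simp add: power_mult_distrib)

lemma diffHc: "p \<in> slit U \<Longrightarrow> Hc differentiable at p"
  using smooth_diff[OF openS smoothHc] .

lemma euler_a: assumes "(z, \<zeta>) \<in> slit U" shows "rdir Hc (z, \<zeta>) (0, \<zeta>) = 2 * Hc (z, \<zeta>)"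
proof -
  have zU: "z \<in> U" using assms by (simp add: slit_def)
  let ?\<gamma> = "\<lambda>t::real. (z, \<zeta>) + t *\<^sub>R (0, \<zeta>)"
  have "rdir Hc (?\<gamma> 0) (0, \<zeta>) = 2 * Hc (z, \<zeta>)"
  proof (rule curve_rdir[where g="\<lambda>t. of_real ((1+t)^2) * Hc (z, \<zeta>)"])
    show "Hc differentiable at (?\<gamma> 0)" using diffHc assms by simp
    show "(?\<gamma> has_derivative (\<lambda>t. t *\<^sub>R (0, \<zeta>))) (at 0)" by (rule line_deriv)
    fix t :: real
    have e: "?\<gamma> t = (z, complex_of_real (1+t) *s \<zeta>)"
      by (simp add: vec_eq_iff) (simp add: scaleR_conv_of_real algebra_simps)
    have "Hc (?\<gamma> t) = of_real ((cmod (complex_of_real (1+t)))^2) * Hc (z, \<zeta>)"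
      unfolding e by (rule homog[OF zU])
    then show "Hc (?\<gamma> t) = of_real ((1+t)^2) * Hc (z, \<zeta>)"
      by (simp only: norm_of_real power2_abs)
  next
    show "((\<lambda>t. complex_of_real ((1 + t)\<^sup>2) * Hc (z, \<zeta>)) has_derivative (\<lambda>t. t *\<^sub>R (2 * Hc (z, \<zeta>)))) (at 0)"
      by (auto intro!: derivative_eq_intros simp: scaleR_conv_of_real)
  qed
  then show ?thesis by simp
qed

lemma euler_b: assumes "(z, \<zeta>) \<in> slit U" shows "rdir Hc (z, \<zeta>) (0, \<i> *s \<zeta>) = 0"
proof -
  have zU: "z \<in> U" using assms by (simp add: slit_def)
  let ?\<gamma> = "\<lambda>t::real. (z, \<zeta>) + (cos t - 1) *\<^sub>R (0, \<zeta>) + sin t *\<^sub>R (0, \<i> *s \<zeta>)"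
  have "rdir Hc (?\<gamma> 0) (0, \<i> *s \<zeta>) = 0"
  proof (rule curve_rdir[where g="\<lambda>t. Hc (z, \<zeta>)"])
    show "Hc differentiable at (?\<gamma> 0)" using diffHc assms by simp
    show "(?\<gamma> has_derivative (\<lambda>t. t *\<^sub>R (0, \<i> *s \<zeta>))) (at 0)" by (rule circ_deriv)
    fix t :: real
    have e: "?\<gamma> t = (z, cis t *s \<zeta>)"
      by (simp add: vec_eq_iff) (simp add: scaleR_conv_of_real algebra_simps cis.ctr Complex_eq)
    have "Hc (?\<gamma> t) = of_real ((cmod (cis t))^2) * Hc (z, \<zeta>)"
      unfolding e by (rule homog[OF zU])
    then show "Hc (?\<gamma> t) = Hc (z, \<zeta>)"
      by (simp only: norm_cis) simp
  next
    show "((\<lambda>t. Hc (z, \<zeta>)) has_derivative (\<lambda>t. t *\<^sub>R 0)) (at 0)"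
      by (auto intro!: derivative_eq_intros)
  qed
  then show ?thesis by simp
qed


lemma euler: assumes pS: "(z, \<zeta>) \<in> slit U"
  shows "(\<Sum>m\<in>UNIV. cnj (\<zeta> $ m) * dzetabar m Hc (z, \<zeta>)) = Hc (z, \<zeta>)"
proof -
  let ?p = "(z, \<zeta>)"
  define L where "L = (\<lambda>w::complex^'n. rdir Hc ?p (0, w))"
  have linD: "linear (rdir Hc ?p)"
    using has_derivative_linear[OF rdir_works[OF diffHc[OF pS]]] .
  have lin: "linear L"
    unfolding L_def
    by (rule bounded_linear.linear, rule bounded_linear_compose[OF has_derivative_bounded_linear[OF rdir_works[OF diffHc[OF pS]]]],
        rule bounded_linear_Pair[OF bounded_linear_zero bounded_linear_ident])
  define a where "a m = L (axis m 1)" for m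
  define b where "b m = L (axis m \<i>)" for m
  have Ldec: "L w = (\<Sum>m\<in>UNIV. Re (w$m) *\<^sub>R a m + Im (w$m) *\<^sub>R b m)" for w
  proof -
    have "L w = L (\<Sum>m\<in>UNIV. Re (w$m) *\<^sub>R axis m 1 + Im (w$m) *\<^sub>R axis m \<i>)"
      using vec_decomp[of w] by metis
    also have "\<dots> = (\<Sum>m\<in>UNIV. Re (w$m) *\<^sub>R a m + Im (w$m) *\<^sub>R b m)"
      by (simp add: linear_sum[OF lin] linear_add[OF lin] linear_scale[OF lin] a_def b_def)
    finally show ?thesis .
  qed
  have "(\<Sum>m\<in>UNIV. cnj (\<zeta> $ m) * dzetabar m Hc ?p) = (\<Sum>m\<in>UNIV. cnj (\<zeta> $ m) * (a m + \<i> * b m)) / 2"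
    unfolding dzetabar_def a_def b_def L_def by (simp add: sum_divide_distrib)
  also have "\<dots> = (L \<zeta> + \<i> * L (\<i> *s \<zeta>)) / 2"
    unfolding Ldec cnj_decomp by (simp add: sum.distrib sum_distrib_left)
  also have "\<dots> = Hc ?p"
    unfolding L_def using euler_a[OF pS] euler_b[OF pS] by simp
  finally show ?thesis .
qed

end


declare of_real_power [simp del]

lemma curve_rdir':
  fixes f :: "'a::real_normed_vector \<Rightarrow> complex" and \<gamma> :: "real \<Rightarrow> 'a"
  assumes fd: "f differentiable at (\<gamma> 0)"
    and gd: "(\<gamma> has_derivative (\<lambda>t. t *\<^sub>R v)) (at 0)"
    and eq: "eventually (\<lambda>t. f (\<gamma> t) = g t) (at 0)" "f (\<gamma> 0) = g 0"
    and g: "(g has_derivative (\<lambda>t. t *\<^sub>R d)) (at 0)"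
  shows "rdir f (\<gamma> 0) v = d"
proof -
  have "((\<lambda>t. f (\<gamma> t)) has_derivative (\<lambda>t. rdir f (\<gamma> 0) (t *\<^sub>R v))) (at 0)"
    by (rule has_derivative_compose[OF gd rdir_works[OF fd]])
  then have "(g has_derivative (\<lambda>t. rdir f (\<gamma> 0) (t *\<^sub>R v))) (at 0)"
    using has_derivative_transform_eventually[of "\<lambda>t. f (\<gamma> t)" _ 0 UNIV g] eq by simp
  from has_derivative_unique[OF this g] have "rdir f (\<gamma> 0) (1 *\<^sub>R v) = 1 *\<^sub>R d" by metis
  then show ?thesis by simp
qed

lemma ds_mult: "f differentiable at p \<Longrightarrow> g differentiable at p \<Longrightarrow>
   delta_star H k (\<lambda>q. f q * g q) p = f p * delta_star H k g p + delta_star H k f p * g p"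
  unfolding delta_star_def
  by (simp add: dz_mult dzeta_mult algebra_simps sum.distrib sum_distrib_left sum_distrib_right)

lemma ds_sum: "finite A \<Longrightarrow> (\<And>i. i \<in> A \<Longrightarrow> f i differentiable at p) \<Longrightarrow>
   delta_star H k (\<lambda>q. \<Sum>i\<in>A. f i q) p = (\<Sum>i\<in>A. delta_star H k (f i) p)"
  unfolding delta_star_def
  by (simp add: dz_sum dzeta_sum sum.distrib sum_distrib_left) (rule sum.swap)

lemma ds_transform: assumes "open S" "p \<in> S" "\<And>q. q \<in> S \<Longrightarrow> f q = g q" "f differentiable at p"
  shows "delta_star H k g p = delta_star H k f p"
  unfolding delta_star_def using dz_transform[OF assms] dzeta_transform[OF assms] by simp

lemma ds_snd: "delta_star H k (\<lambda>q. snd q $ j) p = Nconn H j k p"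
  unfolding delta_star_def by (simp add: dz_snd dzeta_snd if_distrib[of "\<lambda>t. _ * t"] cong: if_cong)

context cartan begin

abbreviation "HH \<equiv> \<lambda>p. (C p)\<^sup>2"

lemma hup_entry: "hup HH q $ a $ b = dzeta b (dzetabar a Hc) q"
  by (simp only: hup_def vec_lambda_beta)

lemma smooth_HH: "smooth_on (slit U) HH"
  using cc unfolding complex_cartan_def by blast

lemma sm_dzb: "smooth_on (slit U) (dzetabar m Hc)"
  by (rule smooth_dzetabar[OF openS smoothHc])

lemma sm_dze: "smooth_on (slit U) (dzeta m Hc)"
  by (rule smooth_dzeta[OF openS smoothHc])

lemma sm_hup: "smooth_on (slit U) (\<lambda>q. hup HH q $ a $ b)"
  unfolding hup_entry by (rule smooth_dzeta[OF openS sm_dzb])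

lemma d_dzb: "p \<in> slit U \<Longrightarrow> dzetabar m Hc differentiable at p"
  by (rule smooth_diff[OF openS sm_dzb])
lemma d_dze: "p \<in> slit U \<Longrightarrow> dzeta m Hc differentiable at p"
  by (rule smooth_diff[OF openS sm_dze])
lemma d_hup: "p \<in> slit U \<Longrightarrow> (\<lambda>q. hup HH q $ a $ b) differentiable at p"
  by (rule smooth_diff[OF openS sm_hup])

lemma rdir_real: "p \<in> slit U \<Longrightarrow> cnj (rdir Hc p v) = rdir Hc p v"
proof -
  assume "p \<in> slit U"
  then have "HH differentiable at p" by (rule smooth_diff[OF openS smooth_HH])
  from rdir_of_real[OF this] show ?thesis by simp
qed

lemma dze_cnj: assumes "p \<in> slit U" shows "dzeta m Hc p = cnj (dzetabar m Hc p)"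
proof -
  have r1: "cnj (rdir Hc p u) = rdir Hc p u" for u using rdir_real[OF assms] .
  show ?thesis
    unfolding dzeta_def dzetabar_def complex_cnj_divide complex_cnj_add complex_cnj_mult complex_cnj_i r1 complex_cnj_numeral
    by (simp add: algebra_simps)
qed

lemma posdef: "p \<in> slit U \<Longrightarrow> v \<noteq> 0 \<Longrightarrow>
   Im (\<Sum>i\<in>UNIV. \<Sum>j\<in>UNIV. hup HH p $ j $ i * v $ i * cnj (v $ j)) = 0 \<and>
   0 < Re (\<Sum>i\<in>UNIV. \<Sum>j\<in>UNIV. hup HH p $ j $ i * v $ i * cnj (v $ j))"
  using cc unfolding complex_cartan_def Let_def by blast

lemma herm: "p \<in> slit U \<Longrightarrow> hup HH p $ a $ b = cnj (hup HH p $ b $ a)"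
  by (rule hermitian_from_pos) (use posdef in blast)

lemma hup_inv: "p \<in> slit U \<Longrightarrow> invertible (hup HH p)"
  by (rule pos_invertible) (use posdef in blast)

lemma hup_ker: "p \<in> slit U \<Longrightarrow> hup HH p *v v = 0 \<Longrightarrow> v = 0"
  by (rule pos_kernel) (use posdef in blast)+

lemma hup_hdown: "p \<in> slit U \<Longrightarrow> (\<Sum>k\<in>UNIV. hup HH p $ a $ k * hdown HH p $ k $ b) = (if a = b then 1 else 0)"
  using matrix_inv_props(1)[OF hup_inv, of p] unfolding hdown_def
  by (simp add: vec_eq_iff matrix_matrix_mult_def mat_def)

lemma hdown_hup: "p \<in> slit U \<Longrightarrow> (\<Sum>k\<in>UNIV. hdown HH p $ a $ k * hup HH p $ k $ b) = (if a = b then 1 else 0)"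
  using matrix_inv_props(2)[OF hup_inv, of p] unfolding hdown_def
  by (simp add: vec_eq_iff matrix_matrix_mult_def mat_def)

lemma d_hdown: assumes pS: "p \<in> slit U" shows "(\<lambda>q. hdown HH q $ j $ m) differentiable at p"
proof (rule diff_transform[OF openS pS])
  let ?M = "\<lambda>q. (\<chi> a c. if c = j then axis m 1 $ a else hup HH q $ a $ c) :: complex^'n^'n"
  show "(\<lambda>q. det (?M q) / det (hup HH q)) differentiable at p"
  proof (intro differentiable_divide det_differentiable)
    fix a b show "(\<lambda>q. ?M q $ a $ b) differentiable at p"
      using d_hup[OF pS] by (cases "b = j") simp_all
  next
    fix a b show "(\<lambda>q. hup HH q $ a $ b) differentiable at p" using d_hup[OF pS] .
  next
    show "det (hup HH p) \<noteq> 0" using hup_inv[OF pS] invertible_det_nz by blast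
  qed
  fix q assume "q \<in> slit U"
  then show "det (?M q) / det (hup HH q) = hdown HH q $ j $ m"
    unfolding hdown_def using matrix_inv_cramer[OF hup_inv] by simp
qed


lemma euler': "q \<in> slit U \<Longrightarrow> (\<Sum>m\<in>UNIV. cnj (snd q $ m) * dzetabar m Hc q) = Hc q"
  using euler[of "fst q" "snd q"] by simp

lemma zeta_up_eq: assumes pS: "p \<in> slit U" shows "zeta_up HH j p = dzeta j Hc p"
proof -
  let ?g = "\<lambda>q. \<Sum>m\<in>UNIV. cnj (snd q $ m) * dzetabar m Hc q"
  have dg: "?g differentiable at p"
    by (rule differentiable_sum, simp, intro ballI differentiable_mult d_dzb[OF pS] diff_cnj_snd)
  have "dzeta j Hc p = dzeta j ?g p"
    by (rule dzeta_transform[OF openS pS euler' dg])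
  also have "\<dots> = (\<Sum>m\<in>UNIV. dzeta j (\<lambda>q. cnj (snd q $ m) * dzetabar m Hc q) p)"
    by (rule dzeta_sum) (auto intro!: differentiable_mult d_dzb[OF pS] diff_cnj_snd)
  also have "\<dots> = (\<Sum>m\<in>UNIV. cnj (snd p $ m) * hup HH p $ m $ j)"
    by (rule sum.cong[OF refl], subst dzeta_mult[OF diff_cnj_snd d_dzb[OF pS]]) (simp add: dzeta_cnj_snd hup_entry)
  finally show ?thesis unfolding zeta_up_def by (simp add: mult.commute)
qed

lemma w_eq: assumes pS: "p \<in> slit U" shows "(\<Sum>i\<in>UNIV. hup HH p $ m $ i * snd p $ i) = dzetabar m Hc p"
proof -
  have "(\<Sum>i\<in>UNIV. hup HH p $ m $ i * snd p $ i) = cnj (\<Sum>i\<in>UNIV. hup HH p $ i $ m * cnj (snd p $ i))"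
    by (simp add: herm[OF pS, of m])
  also have "\<dots> = cnj (dzeta m Hc p)" using zeta_up_eq[OF pS] unfolding zeta_up_def by simp
  also have "\<dots> = dzetabar m Hc p" using dze_cnj[OF pS] by simp
  finally show ?thesis .
qed


lemma hd_w: assumes qS: "q \<in> slit U"
  shows "(\<Sum>m\<in>UNIV. hdown HH q $ j $ m * dzetabar m Hc q) = snd q $ j"
proof -
  have "(\<Sum>m\<in>UNIV. hdown HH q $ j $ m * dzetabar m Hc q)
      = (\<Sum>m\<in>UNIV. hdown HH q $ j $ m * (\<Sum>i\<in>UNIV. hup HH q $ m $ i * snd q $ i))"
    by (simp add: w_eq[OF qS])
  also have "\<dots> = (\<Sum>i\<in>UNIV. (\<Sum>m\<in>UNIV. hdown HH q $ j $ m * hup HH q $ m $ i) * snd q $ i)"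
    by (simp add: sum_distrib_left sum_distrib_right mult_ac) (rule sum.swap)
  also have "\<dots> = snd q $ j"
    by (simp add: hdown_hup[OF qS] if_distrib[of "\<lambda>t. t * _"] cong: if_cong)
  finally show ?thesis .
qed

lemma ds_w: assumes pS: "p \<in> slit U"
  shows "delta_star HH k (dzetabar m Hc) p = 0"
proof -
  let ?f = "\<lambda>q. \<Sum>i\<in>UNIV. hup HH q $ m $ i * snd q $ i"
  let ?D = "\<lambda>a b. dz k (\<lambda>q. hup HH q $ a $ b) p"
  let ?E = "\<lambda>a. \<Sum>b\<in>UNIV. ?D a b * snd p $ b"
  have df: "?f differentiable at p"
    by (rule differentiable_sum, simp, intro ballI differentiable_mult d_hup[OF pS] diff_snd)
  have "dz k (dzetabar m Hc) p = dz k ?f p"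
    by (rule dz_transform[OF openS pS _ df]) (simp add: w_eq)
  also have "\<dots> = ?E m"
    apply (subst dz_sum, simp, intro differentiable_mult d_hup[OF pS] diff_snd)
    apply (rule sum.cong[OF refl])
    apply (subst dz_mult[OF d_hup[OF pS] diff_snd])
    by (simp add: dz_snd)
  finally have 1: "dz k (dzetabar m Hc) p = ?E m" .
  have "(\<Sum>l\<in>UNIV. Nconn HH l k p * dzeta l (dzetabar m Hc) p)
      = (\<Sum>l\<in>UNIV. - (\<Sum>a\<in>UNIV. hdown HH p $ l $ a * ?E a) * hup HH p $ m $ l)"
    unfolding Nconn_def hup_entry by (simp add: sum_distrib_left mult_ac)
  also have "\<dots> = - (\<Sum>a\<in>UNIV. (\<Sum>l\<in>UNIV. hup HH p $ m $ l * hdown HH p $ l $ a) * ?E a)"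
    by (simp add: sum_distrib_left sum_distrib_right mult_ac sum_negf) (rule sum.swap)
  also have "\<dots> = - ?E m"
    by (simp add: hup_hdown[OF pS] if_distrib[of "\<lambda>t. t * _"] cong: if_cong)
  finally have 2: "(\<Sum>l\<in>UNIV. Nconn HH l k p * dzeta l (dzetabar m Hc) p) = - ?E m" .
  show ?thesis unfolding delta_star_def 1 2 by simp
qed

lemma N_HC: assumes pS: "p \<in> slit U"
  shows "Nconn HH j k p = (\<Sum>i\<in>UNIV. HC HH i j k p * snd p $ i)"
proof -
  let ?g = "\<lambda>q. \<Sum>m\<in>UNIV. hdown HH q $ j $ m * dzetabar m Hc q"
  have dg: "?g differentiable at p"
    by (rule differentiable_sum, simp, intro ballI differentiable_mult d_hdown[OF pS] d_dzb[OF pS])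
  have "Nconn HH j k p = delta_star HH k (\<lambda>q. snd q $ j) p" by (simp add: ds_snd)
  also have "\<dots> = delta_star HH k ?g p"
    by (rule ds_transform[OF openS pS _ dg]) (simp add: hd_w)
  also have "\<dots> = (\<Sum>m\<in>UNIV. delta_star HH k (\<lambda>q. hdown HH q $ j $ m) p * dzetabar m Hc p)"
    apply (subst ds_sum, simp, intro differentiable_mult d_hdown[OF pS] d_dzb[OF pS])
    apply (rule sum.cong[OF refl])
    apply (subst ds_mult[OF d_hdown[OF pS] d_dzb[OF pS]])
    by (simp add: ds_w[OF pS])
  also have "\<dots> = (\<Sum>m\<in>UNIV. delta_star HH k (\<lambda>q. hdown HH q $ j $ m) p * (\<Sum>i\<in>UNIV. hup HH p $ m $ i * snd p $ i))"
    by (simp add: w_eq[OF pS])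
  also have "\<dots> = (\<Sum>i\<in>UNIV. HC HH i j k p * snd p $ i)"
    unfolding HC_def by (simp add: sum_distrib_left sum_distrib_right mult_ac) (rule sum.swap)
  finally show ?thesis .
qed


lemma kahler_at:
  assumes berw: "\<forall>i j k. \<exists>G :: complex^'n \<Rightarrow> complex.
        \<forall>z \<zeta>. (z, \<zeta>) \<in> slit U \<longrightarrow> HC HH i j k (z, \<zeta>) = G z"
    and weak: "weakly_kahler_cartan U C"
    and pS: "(z, \<zeta>) \<in> slit U"
  shows "Nconn HH j k (z, \<zeta>) = Nconn HH k j (z, \<zeta>)"
proof -
  obtain G where G: "\<And>i j k z \<zeta>. (z, \<zeta>) \<in> slit U \<Longrightarrow> HC HH i j k (z, \<zeta>) = G i j k z"
    using berw by metis
  have zU: "z \<in> U" using pS by (simp add: slit_def)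
  define c where "c i j' = G i j' k z - G i k j' z" for i j'
  define A where "A j' \<xi> = (\<Sum>i\<in>UNIV. c i j' * \<xi> $ i)" for j' and \<xi> :: "complex^'n"
  have diffN: "Nconn HH j' k (z, \<xi>) - Nconn HH k j' (z, \<xi>) = A j' \<xi>" if "(z, \<xi>) \<in> slit U" for j' \<xi>
    unfolding N_HC[OF that] A_def c_def using G[OF that] by (simp add: sum_subtractf algebra_simps)
  define \<Phi> where "\<Phi> q = (\<Sum>j'\<in>UNIV. A j' (snd q) * dzeta j' Hc q)" for q
  have \<Phi>0: "\<Phi> (z, \<xi>) = 0" if "(z, \<xi>) \<in> slit U" for \<xi>
  proof -
    have "(\<Sum>j'\<in>UNIV. (Nconn HH j' k (z, \<xi>) - Nconn HH k j' (z, \<xi>)) * zeta_up HH j' (z, \<xi>)) = 0"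
      using weak that unfolding weakly_kahler_cartan_def by blast
    then show ?thesis unfolding \<Phi>_def using diffN[OF that] zeta_up_eq[OF that] by simp
  qed
  have dA: "(\<lambda>q. A j' (snd q)) differentiable at p" for j' and p :: "'n cpt"
    unfolding A_def by (rule differentiable_sum, simp, intro ballI differentiable_mult differentiable_const diff_snd)
  have d\<Phi>: "\<Phi> differentiable at (z, \<zeta>)"
    unfolding \<Phi>_def[abs_def] by (rule differentiable_sum, simp, intro ballI differentiable_mult dA d_dze[OF pS])
  have r0: "rdir \<Phi> (z, \<zeta>) (0, w) = 0" for w
  proof -
    let ?\<gamma> = "\<lambda>t::real. (z, \<zeta>) + t *\<^sub>R (0, w)"
    have "rdir \<Phi> (?\<gamma> 0) (0, w) = 0"
    proof (rule curve_rdir'[where g="\<lambda>t. 0"])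
      show "\<Phi> differentiable at (?\<gamma> 0)" using d\<Phi> by simp
      show "(?\<gamma> has_derivative (\<lambda>t. t *\<^sub>R (0, w))) (at 0)" by (rule line_deriv)
      show "\<Phi> (?\<gamma> 0) = 0" using \<Phi>0[OF pS] by simp
      show "((\<lambda>t. 0) has_derivative (\<lambda>t. t *\<^sub>R (0::complex))) (at 0)" by simp
      have "((\<lambda>t::real. \<zeta> + t *\<^sub>R w) \<longlongrightarrow> \<zeta> + 0 *\<^sub>R w) (at 0)"
        by (intro tendsto_intros)
      moreover have "\<zeta> \<noteq> 0" using pS by (simp add: slit_def)
      ultimately have "eventually (\<lambda>t::real. \<zeta> + t *\<^sub>R w \<noteq> 0) (at 0)"
        using tendsto_imp_eventually_ne by fastforce
      then show "eventually (\<lambda>t. \<Phi> (?\<gamma> t) = 0) (at 0)"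
      proof (rule eventually_mono)
        fix t :: real assume "\<zeta> + t *\<^sub>R w \<noteq> 0"
        then have "(z, \<zeta> + t *\<^sub>R w) \<in> slit U" using zU by (simp add: slit_def)
        from \<Phi>0[OF this] show "\<Phi> (?\<gamma> t) = 0" by simp
      qed
    qed
    then show ?thesis by simp
  qed
  have dzb0: "dzetabar l \<Phi> (z, \<zeta>) = 0" for l
    unfolding dzetabar_def r0 by simp
  have dzbA: "dzetabar l (\<lambda>q. A j' (snd q)) p = 0" for l j' and p :: "'n cpt"
    unfolding A_def
    apply (subst dzetabar_sum, simp, intro differentiable_mult differentiable_const diff_snd)
    apply (subst dzetabar_mult[OF differentiable_const diff_snd])
    by (simp add: dzetabar_snd dzetabar_const)
  have dzbd: "dzetabar l (dzeta j' Hc) (z, \<zeta>) = hup HH (z, \<zeta>) $ l $ j'" for l j'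
  proof -
    have dc: "(\<lambda>q. cnj (dzetabar j' Hc q)) differentiable at (z, \<zeta>)"
      using d_dzb[OF pS] by (simp add: differentiable_cnj_iff)
    have "dzetabar l (dzeta j' Hc) (z, \<zeta>) = dzetabar l (\<lambda>q. cnj (dzetabar j' Hc q)) (z, \<zeta>)"
      by (rule dzetabar_transform[OF openS pS _ dc]) (simp add: dze_cnj)
    also have "\<dots> = cnj (dzeta l (dzetabar j' Hc) (z, \<zeta>))"
      by (rule dzetabar_cnj[OF d_dzb[OF pS]])
    also have "\<dots> = hup HH (z, \<zeta>) $ l $ j'"
      using herm[OF pS, of l j'] by (simp add: hup_entry)
    finally show ?thesis .
  qed
  have "(\<Sum>j'\<in>UNIV. hup HH (z, \<zeta>) $ l $ j' * A j' \<zeta>) = 0" for l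
  proof -
    have "dzetabar l \<Phi> (z, \<zeta>) = (\<Sum>j'\<in>UNIV. dzetabar l (\<lambda>q. A j' (snd q) * dzeta j' Hc q) (z, \<zeta>))"
      unfolding \<Phi>_def[abs_def]
      by (subst dzetabar_sum, simp, intro differentiable_mult dA d_dze[OF pS]) simp
    also have "\<dots> = (\<Sum>j'\<in>UNIV. A j' \<zeta> * hup HH (z, \<zeta>) $ l $ j')"
      apply (rule sum.cong[OF refl])
      apply (subst dzetabar_mult[OF dA d_dze[OF pS]])
      by (simp add: dzbA dzbd)
    finally show ?thesis using dzb0 by (simp add: mult.commute)
  qed
  then have "hup HH (z, \<zeta>) *v (\<chi> j'. A j' \<zeta>) = 0"
    by (simp add: vec_eq_iff matrix_vector_mult_def)
  from hup_ker[OF pS this] have "A j \<zeta> = 0" by (simp add: vec_eq_iff)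
  with diffN[OF pS, of j] show ?thesis by simp
qed

end

theorem corollary3p1:
  fixes U :: "(complex^'n::finite) set"
    and C :: "(complex^'n) \<times> (complex^'n) \<Rightarrow> real"
  assumes "complex_cartan U C"
    and "strongly_berwald_cartan U C"
  shows "kahler_cartan U C"
proof -
  interpret cartan U C by (rule cartan.intro[OF assms(1)])
  show ?thesis
    unfolding kahler_cartan_def
  proof (intro ballI allI)
    fix p j k assume "p \<in> slit U"
    then show "Nconn (\<lambda>p. (C p)\<^sup>2) j k p = Nconn (\<lambda>p. (C p)\<^sup>2) k j p"
      using kahler_at[where z="fst p" and \<zeta>="snd p" and j=j and k=k] assms(2) unfolding strongly_berwald_cartan_def berwald_cartan_def
      by simp
  qed
qed

end
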